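(* Let $\Sigma=\{0,1\}$. The map $\mathrm{val}_{\mathcal{F}c}$ restricted to $D=\Sigma(\Sigma\Sigma)^*\setminus\left(\Sigma^*11\Sigma^*\cup000\Sigma^*\cup101\Sigma^*\right)$ is a bijection $D\to\mathbb{Z}$.
   Context: Fibonacci numbers: $F_0=1$, $F_1=2$, $F_n=F_{n-1}+F_{n-2}$ for $n\ge2$. For a nonempty binary word $w=w_{k-1}\cdots w_0$ (digits indexed from the right, $w_0$ is the last letter), $\mathrm{val}_{\mathcal{F}c}(w)=\sum_{i=0}^{k-1}w_iF_i-w_{k-1}F_k$. *)

theory Defs
  imports Main
begin

fun fibc :: "nat \<Rightarrow> int" where
  "fibc 0 = 1"
| "fibc (Suc 0) = 2"
| "fibc (Suc (Suc n)) = fibc (Suc n) + fibc n"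

text \<open>A binary word w = w_{k-1} ... w_0 is a list of naturals (digits 0/1), written left to right,
  so the list element at position j is the digit w_{k-1-j}.\<close>
definition digit :: "nat list \<Rightarrow> nat \<Rightarrow> int" where
  "digit w i = int (w ! (length w - 1 - i))"

definition valFc :: "nat list \<Rightarrow> int" where
  "valFc w = (\<Sum>i<length w. digit w i * fibc i) - digit w (length w - 1) * fibc (length w)"

definition Dset :: "nat list set" where
  "Dset = {w. set w \<subseteq> {0, 1} \<and> odd (length w)
              \<and> \<not> (\<exists>u v. w = u @ [1, 1] @ v)
              \<and> \<not> (\<exists>v. w = [0, 0, 0] @ v)
              \<and> \<not> (\<exists>v. w = [1, 0, 1] @ v)}"

end

theory Submission
  imports Defs
begin

definition S :: "nat list \<Rightarrow> int" where
  "S w = (\<Sum>i<length w. digit w i * fibc i)"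

lemma S_Nil[simp]: "S [] = 0" by (simp add: S_def)

lemma digit_Cons_top: "digit (a#w) (length w) = int a"
  by (simp add: digit_def)

lemma digit_Cons_low: "i < length w \<Longrightarrow> digit (a#w) i = digit w i"
proof -
  assume i: "i < length w"
  have "length w - i = Suc (length w - 1 - i)" using i by simp
  thus ?thesis by (simp add: digit_def)
qed

lemma S_Cons[simp]: "S (a#w) = int a * fibc (length w) + S w"
proof -
  have "S (a#w) = (\<Sum>i<length w. digit (a#w) i * fibc i) + digit (a#w) (length w) * fibc (length w)"
    by (simp add: S_def)
  also have "(\<Sum>i<length w. digit (a#w) i * fibc i) = S w"
    unfolding S_def by (rule sum.cong) (auto simp: digit_Cons_low)
  finally show ?thesis by (simp add: digit_Cons_top)
qed

lemma val_Cons: "valFc (a#w) = S (a#w) - int a * fibc (Suc (length w))"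
  unfolding valFc_def S_def[symmetric] by (simp add: digit_Cons_top)

lemma fib_pos: "fibc n \<ge> 1"
  by (induction n rule: fibc.induct) simp_all

lemma fib_Suc_gt: "fibc n < fibc (Suc n)"
proof (cases n)
  case 0 then show ?thesis by simp
next
  case (Suc k) then show ?thesis using fib_pos[of k] by simp
qed

lemma fib_mono: "m \<le> n \<Longrightarrow> fibc m \<le> fibc n"
  by (rule lift_Suc_mono_le[of fibc]) (auto intro: less_imp_le fib_Suc_gt)

lemma fib_ge: "fibc n \<ge> int n + 1"
  by (induction n rule: fibc.induct) auto

fun nz :: "nat list \<Rightarrow> bool" where
  "nz [] = True"
| "nz [a] = (a \<le> 1)"
| "nz (a#b#w) = (a \<le> 1 \<and> (a = 1 \<longrightarrow> b = 0) \<and> nz (b#w))"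

lemma nz_tl: "nz (a#w) \<Longrightarrow> nz w"
  by (cases w) auto

lemma nz_hd: "nz (a#w) \<Longrightarrow> a \<le> 1"
  by (cases w) auto

lemma nz_0: "nz w \<Longrightarrow> nz (0#w)"
  by (cases w) auto

lemma has11_Cons2:
  "(\<exists>u v. a#b#w = u@[1::nat,1]@v) \<longleftrightarrow> (a=1 \<and> b=1) \<or> (\<exists>u v. b#w = u@[1,1]@v)"
proof
  assume "\<exists>u v. a#b#w = u@[1,1]@v"
  then obtain u v where e: "a#b#w = u@[1,1]@v" by blast
  show "(a=1 \<and> b=1) \<or> (\<exists>u v. b#w = u@[1,1]@v)"
  proof (cases u)
    case Nil then show ?thesis using e by simp
  next
    case (Cons x u') then show ?thesis using e by auto
  qed
next
  assume "(a=1 \<and> b=1) \<or> (\<exists>u v. b#w = u@[1,1]@v)"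
  then show "\<exists>u v. a#b#w = u@[1,1]@v"
  proof
    assume "a=1 \<and> b=1" then show ?thesis by (intro exI[of _ "[]"] exI[of _ w]) auto
  next
    assume "\<exists>u v. b#w = u@[1,1]@v"
    then obtain u v where "b#w = u@[1,1]@v" by blast
    then show ?thesis by (intro exI[of _ "a#u"] exI[of _ v]) simp
  qed
qed

lemma aux_bool: "(a::nat) \<le> 1 \<and> (a = 1 \<longrightarrow> b = 0) \<and> set (b#w) \<subseteq> {0,1} \<and> \<not> Q
   \<longleftrightarrow> set (a#b#w) \<subseteq> {0,1} \<and> \<not> ((a=1 \<and> b=1) \<or> Q)"
  by auto

lemma nz_iff: "nz w \<longleftrightarrow> set w \<subseteq> {0,1} \<and> \<not> (\<exists>u v. w = u@[1,1]@v)"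
proof (induction w rule: nz.induct)
  case 1 then show ?case by simp
next
  case (2 a)
  have "\<not> (\<exists>u v. [a] = u@[1,1]@v)"
  proof
    assume "\<exists>u v. [a] = u@[1,1]@v"
    then obtain u v where "[a] = u@[1,1]@v" by blast
    then have "length [a] = length (u@[1,1]@v)" by simp
    then show False by simp
  qed
  then show ?case by auto
next
  case (3 a b w)
  have "nz (a#b#w) = (a \<le> 1 \<and> (a = 1 \<longrightarrow> b = 0) \<and> nz (b#w))" by simp
  also have "\<dots> = (a \<le> 1 \<and> (a = 1 \<longrightarrow> b = 0) \<and> set (b#w) \<subseteq> {0,1} \<and> \<not> (\<exists>u v. b#w = u@[1,1]@v))"
    using 3 by simp
  also have "\<dots> = (set (a#b#w) \<subseteq> {0,1} \<and> \<not> (\<exists>u v. a#b#w = u@[1,1]@v))"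
    unfolding has11_Cons2 by (rule aux_bool)
  finally show ?case .
qed

lemma S_bound: "nz u \<Longrightarrow> 0 \<le> S u \<and> S u < fibc (length u)"
proof (induction "length u" arbitrary: u rule: less_induct)
  case less
  show ?case
  proof (cases u)
    case Nil then show ?thesis by simp
  next
    case (Cons a w)
    show ?thesis
    proof (cases w)
      case Nil then show ?thesis using Cons less.prems by auto
    next
      case (Cons b w')
      note u = \<open>u = a#w\<close>
      have nw: "nz w" using less.prems u nz_tl by blast
      have nw': "nz w'" using nw Cons nz_tl by blast
      have ih1: "0 \<le> S w \<and> S w < fibc (length w)" using less.hyps[of w] nw u by simp
      have ih2: "0 \<le> S w' \<and> S w' < fibc (length w')" using less.hyps[of w'] nw' u Cons by simp
      have F: "fibc (length u) = fibc (length w) + fibc (length w')" using u Cons by simp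
      have "a = 0 \<or> (a = 1 \<and> b = 0)" using less.prems u Cons by auto
      then show ?thesis
      proof
        assume "a = 0" then show ?thesis using ih1 F u fib_pos[of "length w'"] by simp
      next
        assume "a = 1 \<and> b = 0"
        then show ?thesis using ih2 F u Cons fib_pos[of "length w'"] fib_pos[of "Suc (length w')"] by simp
      qed
    qed
  qed
qed

lemma S_inj: "nz u \<Longrightarrow> nz v \<Longrightarrow> length u = length v \<Longrightarrow> S u = S v \<Longrightarrow> u = v"
proof (induction u arbitrary: v)
  case Nil then show ?case by simp
next
  case (Cons a u')
  then obtain b v' where v: "v = b#v'" by (cases v) auto
  have nu: "nz u'" using Cons.prems nz_tl by blast
  have nv: "nz v'" using Cons.prems v nz_tl by blast
  have len: "length u' = length v'" using Cons.prems v by simp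
  have bu: "0 \<le> S u' \<and> S u' < fibc (length u')" using S_bound nu by blast
  have bv: "0 \<le> S v' \<and> S v' < fibc (length v')" using S_bound nv by blast
  have a01: "a \<le> 1" using Cons.prems by (cases u') auto
  have b01: "b \<le> 1" using Cons.prems v by (cases v') auto
  have "a = b"
  proof (rule ccontr)
    assume "a \<noteq> b"
    then have "(a = 1 \<and> b = 0) \<or> (a = 0 \<and> b = 1)" using a01 b01 by auto
    then show False using Cons.prems v len bu bv by auto
  qed
  then have "S u' = S v'" using Cons.prems v by simp
  then show ?case using Cons.IH[OF nu nv len] \<open>a = b\<close> v by simp
qed

lemma S_surj: "0 \<le> x \<Longrightarrow> x < fibc n \<Longrightarrow> \<exists>u. nz u \<and> length u = n \<and> S u = x"
proof (induction n arbitrary: x rule: fibc.induct)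
  case 1 then show ?case by (intro exI[of _ "[]"]) simp
next
  case 2
  then have "x = 0 \<or> x = 1" by auto
  then show ?case
  proof
    assume "x = 0" then show ?thesis by (intro exI[of _ "[0]"]) simp
  next
    assume "x = 1" then show ?thesis by (intro exI[of _ "[1]"]) simp
  qed
next
  case (3 n)
  show ?case
  proof (cases "x < fibc (Suc n)")
    case True
    then obtain u where u: "nz u" "length u = Suc n" "S u = x" using 3 by blast
    then show ?thesis by (intro exI[of _ "0#u"]) (simp add: nz_0)
  next
    case False
    have "x - fibc (Suc n) < fibc n" using 3(4) by simp
    moreover have "0 \<le> x - fibc (Suc n)" using False by simp
    ultimately obtain u where u: "nz u" "length u = n" "S u = x - fibc (Suc n)" using 3(2) by blast
    then show ?thesis by (intro exI[of _ "1#0#u"]) (simp add: nz_0)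
  qed
qed

lemma Dset_iff: "w \<in> Dset \<longleftrightarrow> nz w \<and> odd (length w) \<and> \<not> (\<exists>v. w = [0,0,0] @ v) \<and> \<not> (\<exists>v. w = [1,0,1] @ v)"
  unfolding Dset_def nz_iff by auto

lemma val_C: "valFc (0#u) = S u"
  by (simp add: val_Cons)

lemma val_D: "valFc (1#0#0#u) = S u - fibc (Suc (length u))"
  by (simp add: val_Cons)

definition classC :: "nat list \<Rightarrow> bool" where
  "classC w = (\<exists>u m. w = 0#u \<and> length u = 2*m+2 \<and> nz u \<and> fibc (2*m) \<le> valFc w \<and> valFc w < fibc (2*m+2) \<and> S u = valFc w)"

definition classD :: "nat list \<Rightarrow> bool" where
  "classD w = (\<exists>u m. w = 1#0#0#u \<and> length u = 2*m \<and> nz u \<and> - fibc (2*m+1) \<le> valFc w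
         \<and> valFc w < fibc (2*m) - fibc (2*m+1) \<and> S u = valFc w + fibc (2*m+1))"

lemma D_class:
  assumes "w \<in> Dset"
  shows "(w = [0] \<and> valFc w = 0) \<or> (w = [1] \<and> valFc w = -1)
    \<or> classC w \<or> classD w"
proof -
  have D: "nz w" "odd (length w)" "\<not> (\<exists>v. w = [0,0,0] @ v)" "\<not> (\<exists>v. w = [1,0,1] @ v)"
    using assms Dset_iff by auto
  obtain a w' where w: "w = a#w'" using D(2) by (cases w) auto
  show ?thesis
  proof (cases w')
    case Nil
    then have "a = 0 \<or> a = 1" using D(1) w by auto
    then show ?thesis using w Nil by (auto simp: valFc_def digit_def)
  next
    case (Cons b w2)
    then obtain c u where w2: "w2 = c#u" using D(2) w by (cases w2) auto
    have ev: "even (length u)" using D(2) w Cons w2 by simp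
    then obtain m where m: "length u = 2*m" by (metis evenE)
    have a01: "a = 0 \<or> a = 1" using D(1) w Cons by auto
    then show ?thesis
    proof
      assume a: "a = 0"
      have nw': "nz w'" using D(1) w nz_tl by blast
      have lw': "length w' = 2*m+2" using Cons w2 m by simp
      have bd: "0 \<le> S w' \<and> S w' < fibc (2*m+2)" using S_bound[OF nw'] lw' by simp
      have "\<not> (b = 0 \<and> c = 0)" using D(3) w a Cons w2 by auto
      moreover have "b \<le> 1" "c \<le> 1" using nw' Cons w2 nz_hd nz_tl by blast+
      ultimately have "b = 1 \<or> c = 1" by auto
      then have lo: "fibc (2*m) \<le> S w'"
      proof
        assume b1: "b = 1"
        have "nz (c#u)" using nw' Cons w2 nz_tl by blast
        then have "0 \<le> S (c#u)" using S_bound by blast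
        moreover have "fibc (2*m) \<le> fibc (length (c#u))" using m by (intro fib_mono) simp
        ultimately show ?thesis using Cons w2 b1 by simp
      next
        assume c: "c = 1"
        have "nz u" using nw' Cons w2 nz_tl by blast
        then have "0 \<le> S u" using S_bound by blast
        moreover have "0 \<le> int b * fibc (Suc (length u))" using fib_pos[of "Suc (length u)"] by simp
        ultimately show ?thesis using Cons w2 m c by simp
      qed
      show ?thesis unfolding classC_def using a w val_C[of w'] lw' nw' bd lo by auto
    next
      assume a: "a = 1"
      have b: "b = 0" using D(1) w a Cons by simp
      have "c \<le> 1" using D(1) w Cons w2 nz_tl nz_hd by blast
      then have c: "c = 0" using D(4) w a b Cons w2 by auto
      have nu: "nz u" using D(1) w Cons w2 nz_tl by blast
      have bd: "0 \<le> S u \<and> S u < fibc (2*m)" using S_bound[OF nu] m by simp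
      show ?thesis unfolding classD_def using w a b c Cons w2 val_D[of u] m nu bd by auto
    qed
  qed
qed

lemma fib_gap: "fibc n + 1 \<le> fibc (Suc n)" using fib_Suc_gt[of n] by simp

lemma D_upper_mono: "m < m' \<Longrightarrow> fibc (2*m') - fibc (2*m'+1) \<le> - fibc (2*m+1)"
proof -
  assume "m < m'"
  then obtain j where j: "m' = Suc j" "m \<le> j" by (cases m') auto
  have "fibc (2*m'+1) = fibc (2*j+2) + fibc (2*j+1)"
    using j by (simp add: numeral_eq_Suc)
  moreover have "2*m' = 2*j+2" using j by simp
  moreover have "fibc (2*m+1) \<le> fibc (2*j+1)" using j fib_mono by simp
  ultimately show ?thesis by simp
qed

lemma C_pos: "classC w \<Longrightarrow> valFc w \<ge> 1"
proof -
  assume "classC w"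
  then obtain m where "fibc (2*m) \<le> valFc w" unfolding classC_def by blast
  then show ?thesis using fib_pos[of "2*m"] by simp
qed

lemma D_neg: "classD w \<Longrightarrow> valFc w \<le> -2"
proof -
  assume "classD w"
  then obtain m where "valFc w < fibc (2*m) - fibc (2*m+1)" unfolding classD_def by blast
  then show ?thesis using fib_gap[of "2*m"] by simp
qed

lemma C_inj: "classC w1 \<Longrightarrow> classC w2 \<Longrightarrow> valFc w1 = valFc w2 \<Longrightarrow> w1 = w2"
proof -
  assume "classC w1" "classC w2" and e: "valFc w1 = valFc w2"
  then obtain u m u' m' where
    A: "w1 = 0#u" "length u = 2*m+2" "nz u" "fibc (2*m) \<le> valFc w1" "valFc w1 < fibc (2*m+2)" "S u = valFc w1"
    and B: "w2 = 0#u'" "length u' = 2*m'+2" "nz u'" "fibc (2*m') \<le> valFc w2" "valFc w2 < fibc (2*m'+2)" "S u' = valFc w2"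
    unfolding classC_def by blast
  have "m = m'"
  proof (rule ccontr)
    assume "m \<noteq> m'"
    then have "m < m' \<or> m' < m" by auto
    then show False
    proof
      assume "m < m'" then have "fibc (2*m+2) \<le> fibc (2*m')" by (intro fib_mono) simp
      then show False using A B e by simp
    next
      assume "m' < m" then have "fibc (2*m'+2) \<le> fibc (2*m)" by (intro fib_mono) simp
      then show False using A B e by simp
    qed
  qed
  then show "w1 = w2" using S_inj[OF A(3) B(3)] A B e by simp
qed

lemma D_inj: "classD w1 \<Longrightarrow> classD w2 \<Longrightarrow> valFc w1 = valFc w2 \<Longrightarrow> w1 = w2"
proof -
  assume "classD w1" "classD w2" and e: "valFc w1 = valFc w2"
  then obtain u m u' m' where
    A: "w1 = 1#0#0#u" "length u = 2*m" "nz u" "- fibc (2*m+1) \<le> valFc w1" "valFc w1 < fibc (2*m) - fibc (2*m+1)" "S u = valFc w1 + fibc (2*m+1)"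
    and B: "w2 = 1#0#0#u'" "length u' = 2*m'" "nz u'" "- fibc (2*m'+1) \<le> valFc w2" "valFc w2 < fibc (2*m') - fibc (2*m'+1)" "S u' = valFc w2 + fibc (2*m'+1)"
    unfolding classD_def by blast
  have "m = m'"
  proof (rule ccontr)
    assume "m \<noteq> m'"
    then have "m < m' \<or> m' < m" by auto
    then show False
    proof
      assume "m < m'" then show False using D_upper_mono[of m m'] A B e by simp
    next
      assume "m' < m" then show False using D_upper_mono[of m' m] A B e by simp
    qed
  qed
  then show "w1 = w2" using S_inj[OF A(3) B(3)] A B e by simp
qed

lemma inj_D: "inj_on valFc Dset"
proof (rule inj_onI)
  fix w1 w2 assume w1: "w1 \<in> Dset" and w2: "w2 \<in> Dset" and e: "valFc w1 = valFc w2"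
  note c2 = D_class[OF w2]
  note f = C_pos[of w1] C_pos[of w2] D_neg[of w1] D_neg[of w2] C_inj[of w1 w2] D_inj[of w1 w2]
  from D_class[OF w1] show "w1 = w2"
  proof (elim disjE)
    assume "w1 = [0] \<and> valFc w1 = 0" then show ?thesis using c2 f e by fastforce
  next
    assume "w1 = [1] \<and> valFc w1 = -1" then show ?thesis using c2 f e by fastforce
  next
    assume "classC w1" then show ?thesis using c2 f e by fastforce
  next
    assume "classD w1" then show ?thesis using c2 f e by fastforce
  qed
qed

lemma pos_range: "1 \<le> x \<Longrightarrow> x < fibc (2*n+2) \<Longrightarrow> \<exists>m. fibc (2*m) \<le> x \<and> x < fibc (2*m+2)"
proof (induction n)
  case 0 then show ?case using fib_pos[of 0] by (intro exI[of _ 0]) simp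
next
  case (Suc n)
  show ?case
  proof (cases "x < fibc (2*n+2)")
    case True then show ?thesis using Suc by blast
  next
    case False then show ?thesis using Suc.prems by (intro exI[of _ "Suc n"]) simp
  qed
qed

lemma neg_range: "2 \<le> y \<Longrightarrow> y \<le> fibc (2*n+1) \<Longrightarrow> \<exists>m. fibc (2*m+1) - fibc (2*m) < y \<and> y \<le> fibc (2*m+1)"
proof (induction n)
  case 0 then show ?case by (intro exI[of _ 0]) simp
next
  case (Suc n)
  show ?case
  proof (cases "y \<le> fibc (2*n+1)")
    case True then show ?thesis using Suc by blast
  next
    case False
    have "fibc (2*Suc n+1) - fibc (2*Suc n) = fibc (2*n+1)" by (simp add: numeral_eq_Suc)
    then show ?thesis using Suc.prems False by (intro exI[of _ "Suc n"]) simp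
  qed
qed

lemma surj_D: "valFc ` Dset = UNIV"
proof -
  have "x \<in> valFc ` Dset" for x
  proof -
    consider "x = 0" | "x = -1" | "x \<ge> 1" | "x \<le> -2" by linarith
    then show ?thesis
    proof cases
      case 1
      have "[0] \<in> Dset" by (simp add: Dset_iff)
      moreover have "valFc [0] = 0" by (simp add: valFc_def digit_def)
      ultimately show ?thesis using 1 by (metis image_eqI)
    next
      case 2
      have "[1] \<in> Dset" by (simp add: Dset_iff)
      moreover have "valFc [1] = -1" by (simp add: valFc_def digit_def)
      ultimately show ?thesis using 2 by (metis image_eqI)
    next
      case 3
      have "x < fibc (2 * nat x + 2)" using fib_ge[of "2 * nat x + 2"] 3 by simp
      then obtain m where m: "fibc (2*m) \<le> x" "x < fibc (2*m+2)" using pos_range 3 by blast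
      then obtain u where u: "nz u" "length u = 2*m+2" "S u = x"
        using S_surj[of x "2*m+2"] 3 by auto
      have n00: "\<not> (\<exists>u'. u = 0#0#u')"
      proof
        assume "\<exists>u'. u = 0#0#u'"
        then obtain u' where u': "u = 0#0#u'" by blast
        then have "nz u'" using u nz_tl by blast
        then have "S u' < fibc (2*m)" using S_bound u u' by fastforce
        then show False using u u' m by simp
      qed
      have "0#u \<in> Dset" using u n00 by (auto simp: Dset_iff nz_0)
      moreover have "valFc (0#u) = x" using u val_C by simp
      ultimately show ?thesis by (metis image_eqI)
    next
      case 4
      have "-x \<le> fibc (2 * nat (-x) + 1)" using fib_ge[of "2 * nat (-x) + 1"] 4 by simp
      then obtain m where m: "fibc (2*m+1) - fibc (2*m) < -x" "-x \<le> fibc (2*m+1)"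
        using neg_range[of "-x"] 4 by auto
      then obtain u where u: "nz u" "length u = 2*m" "S u = x + fibc (2*m+1)"
        using S_surj[of "x + fibc (2*m+1)" "2*m"] by auto
      have "1#0#0#u \<in> Dset" using u by (auto simp: Dset_iff nz_0)
      moreover have "valFc (1#0#0#u) = x" using u val_D by simp
      ultimately show ?thesis by (metis image_eqI)
    qed
  qed
  then show ?thesis by auto
qed

theorem proposition2p3:
  shows "bij_betw valFc Dset (UNIV :: int set)"
  unfolding bij_betw_def using inj_D surj_D by blast

end
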